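(* Let $\mathcal F=\{F_1,\dots,F_k\}$, $\mathcal I=\{0,1\}^k\setminus\{\boldsymbol 0\}$, $\mathcal I_0=\{0,1\}^k$, $I=2^k-1$, let $\mathcal F_{asc}$ be an ascending class of subsets of $\mathcal F$, $\mathcal F_{des}=2^{\mathcal F}\setminus\mathcal F_{asc}\setminus\{\varnothing\}$, and let $\mathbf A$ be the design matrix of the HAS model generated by $\mathcal F_{asc}$ (rows indexed by $W\in\mathcal F_{des}$, columns by $\boldsymbol i\in\mathcal I$, entry $1$ iff $W\subseteq\phi(\boldsymbol i)$). Let $\mathcal X_{\mathbf A}$ be the associated variety and $\overline{\mathcal X}_{\mathbf A}$ its projective closure, with the extra homogenizing coordinate $p_0$ corresponding to the zero cell $\boldsymbol 0$. Then the intersection of $\overline{\mathcal X}_{\mathbf A}$ with the interior of the $I$-dimensional simplex $\mathrm{int}(\Delta_I)$ is homeomorphic to the hierarchical log-linear model $LL(\mathcal F_{asc})$ on $\mathcal I_0$.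
   Context: $\phi(\boldsymbol i)$ is the set of features whose coordinate in $\boldsymbol i$ equals $1$. $\mathcal X_{\mathbf A}=\{\boldsymbol p\in\mathbb R^{I}_{\ge0}:\ \boldsymbol p^{\boldsymbol d^+}=\boldsymbol p^{\boldsymbol d^-}\ \text{for all integer }\boldsymbol d\in\mathrm{Ker}(\mathbf A)\}$, where $\boldsymbol d^\pm$ are the positive and negative parts of $\boldsymbol d$ and powers are componentwise monomials. The projective closure $\overline{\mathcal X}_{\mathbf A}$ is the smallest projective variety in projective space with homogeneous coordinates $(p_0:p(\boldsymbol i))_{\boldsymbol i\in\mathcal I}$ whose dehomogenization at $p_0=1$ is $\mathcal X_{\mathbf A}$ (obtained by homogenizing, with $p_0$, the polynomials of a Gröbner basis of the ideal of $\mathcal X_{\mathbf A}$). Its intersection with $\mathrm{int}(\Delta_I)$ means the set of strictly positive vectors $(p_0,(p(\boldsymbol i))_{\boldsymbol i\in\mathcal I})$ with coordinates summing to $1$ lying in (the cone of) $\overline{\mathcal X}_{\mathbf A}$. $LL(\mathcal F_{asc})$ is the set of strictly positive probability distributions $\boldsymbol p$ on $\mathcal I_0$ such that, writing $\log p(\boldsymbol i)=\sum_{V\subseteq\phi(\boldsymbol i)}\beta_V$ ($V$ over all subsets of $\mathcal F$, including $\varnothing$; a unique representation), $\beta_V=0$ for all $V\in\mathcal F_{asc}$. *)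

theory Defs
  imports "HOL-Analysis.Analysis"
begin

text \<open>Features: the finite type 'f (so F = UNIV, k = CARD('f) \<ge> 1).
  Cells i \<in> {0,1}^k are identified with subsets of features, i.e. with phi(i);
  the zero cell is {}. Points of R^(I_0) are vectors of type real ^ ('f set);
  the coordinate at {} is the homogenizing coordinate p_0.\<close>

definition cells_I :: "'f::finite set set" where
  "cells_I = UNIV - {{}}"

definition ascending_class :: "'f::finite set set \<Rightarrow> bool" where
  "ascending_class Fa \<longleftrightarrow> {} \<notin> Fa \<and> (\<forall>V\<in>Fa. \<forall>W. V \<subseteq> W \<longrightarrow> W \<in> Fa)"

definition F_des :: "'f::finite set set \<Rightarrow> 'f set set" where
  "F_des Fa = UNIV - Fa - {{}}"

definition design_matrix :: "'f::finite set \<Rightarrow> 'f set \<Rightarrow> int" where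
  "design_matrix W i = (if W \<subseteq> i then 1 else 0)"

definition int_kernel :: "'f::finite set set \<Rightarrow> ('f set \<Rightarrow> int) set" where
  "int_kernel Fa = {d. d {} = 0 \<and>
     (\<forall>W\<in>F_des Fa. (\<Sum>i\<in>cells_I. design_matrix W i * d i) = 0)}"

definition monom_pos :: "('f::finite set \<Rightarrow> real) \<Rightarrow> ('f set \<Rightarrow> int) \<Rightarrow> real" where
  "monom_pos p d = (\<Prod>i\<in>cells_I. p i ^ nat (d i))"

definition monom_neg :: "('f::finite set \<Rightarrow> real) \<Rightarrow> ('f set \<Rightarrow> int) \<Rightarrow> real" where
  "monom_neg p d = (\<Prod>i\<in>cells_I. p i ^ nat (- d i))"

definition X_A :: "'f::finite set set \<Rightarrow> ('f set \<Rightarrow> real) set" where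
  "X_A Fa = {p. p {} = 0 \<and> (\<forall>i\<in>cells_I. p i \<ge> 0) \<and>
     (\<forall>d\<in>int_kernel Fa. monom_pos p d = monom_neg p d)}"

text \<open>Real polynomials in the variables p(i), i \<in> I_0 (p_0 = p({})):
  coefficient functions on exponent vectors with finite support.\<close>
definition is_poly :: "(('f::finite set \<Rightarrow> nat) \<Rightarrow> real) \<Rightarrow> bool" where
  "is_poly c \<longleftrightarrow> finite {m. c m \<noteq> 0}"

definition homogeneous_poly :: "(('f::finite set \<Rightarrow> nat) \<Rightarrow> real) \<Rightarrow> bool" where
  "homogeneous_poly c \<longleftrightarrow> (\<exists>n. \<forall>m. c m \<noteq> 0 \<longrightarrow> (\<Sum>v\<in>UNIV. m v) = n)"

definition poly_eval :: "(('f::finite set \<Rightarrow> nat) \<Rightarrow> real) \<Rightarrow> real ^ ('f set) \<Rightarrow> real" where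
  "poly_eval c q = (\<Sum>m\<in>{m. c m \<noteq> 0}. c m * (\<Prod>v\<in>UNIV. (q $ v) ^ m v))"

definition homog_pt :: "('f::finite set \<Rightarrow> real) \<Rightarrow> real ^ ('f set)" where
  "homog_pt p = (\<chi> i. if i = {} then 1 else p i)"

text \<open>(Affine cone over) the projective closure: common zeros of all homogeneous
  polynomials vanishing on the points (1 : p), p \<in> X_A, i.e. the smallest projective
  variety whose dehomogenization at p_0 = 1 contains X_A.\<close>
definition proj_closure :: "'f::finite set set \<Rightarrow> (real ^ ('f set)) set" where
  "proj_closure Fa = {q. \<forall>c. is_poly c \<and> homogeneous_poly c \<and>
      (\<forall>p\<in>X_A Fa. poly_eval c (homog_pt p) = 0) \<longrightarrow> poly_eval c q = 0}"

definition int_simplex :: "(real ^ ('f::finite set)) set" where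
  "int_simplex = {q. (\<forall>i. q $ i > 0) \<and> (\<Sum>i\<in>UNIV. q $ i) = 1}"

definition LL :: "'f::finite set set \<Rightarrow> (real ^ ('f set)) set" where
  "LL Fa = {p. (\<forall>i. p $ i > 0) \<and> (\<Sum>i\<in>UNIV. p $ i) = 1 \<and>
     (\<exists>\<beta>::'f set \<Rightarrow> real. (\<forall>i. ln (p $ i) = (\<Sum>V\<in>Pow i. \<beta> V)) \<and>
        (\<forall>V\<in>Fa. \<beta> V = 0))}"

end

theory Submission
  imports Defs
begin

lemma alt_K:
  fixes S U :: "'a set"
  assumes "finite S" "U \<subseteq> S"
  shows "(\<Sum>T | T \<subseteq> S \<and> U \<subseteq> T. (-1::'b::ring_1) ^ card T) = (if U = S then (-1)^card S else 0)"
proof (cases "U = S")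
  case True
  then have "{T. T \<subseteq> S \<and> U \<subseteq> T} = {S}" by auto
  then show ?thesis using True by simp
next
  case False
  then have "U \<subset> S" using assms by auto
  have fin: "finite {T. T \<subseteq> S \<and> U \<subseteq> T}"
    using assms(1) by (rule finite_subset[rotated, OF finite_Pow_iff[THEN iffD2]]) auto
  have "card {T. T \<in> {T. T \<subseteq> S \<and> U \<subseteq> T} \<and> even (card T)} = card {T. T \<in> {T. T \<subseteq> S \<and> U \<subseteq> T} \<and> odd (card T)}"
    using card_subsupersets_even_odd[OF assms(1) \<open>U \<subset> S\<close>] by (simp add: conj_assoc)
  from sum_alternating_cancels[OF fin this] show ?thesis using False by simp
qed

lemma mobius_inv:
  fixes l :: "'a set \<Rightarrow> real"
  assumes "finite i"
  shows "(\<Sum>V\<in>Pow i. \<Sum>U\<in>Pow V. (-1)^card V * (-1)^card U * l U) = l i"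
proof -
  have "(\<Sum>V\<in>Pow i. \<Sum>U\<in>Pow V. (-1)^card V * (-1)^card U * l U)
      = (\<Sum>V\<in>Pow i. \<Sum>U\<in>{U. U \<in> Pow i \<and> U \<subseteq> V}. (-1)^card V * (-1)^card U * l U)"
    by (rule sum.cong) (auto intro!: sum.cong)
  also have "\<dots> = (\<Sum>U\<in>Pow i. \<Sum>V\<in>{V. V \<in> Pow i \<and> U \<subseteq> V}. (-1)^card V * (-1)^card U * l U)"
    by (rule sum.swap_restrict) (auto simp: assms)
  also have "\<dots> = (\<Sum>U\<in>Pow i. ((-1)^card U * l U) * (\<Sum>V | V \<subseteq> i \<and> U \<subseteq> V. (-1)^card V))"
    by (rule sum.cong) (auto simp: sum_distrib_left mult_ac intro!: sum.cong)
  also have "\<dots> = (\<Sum>U\<in>Pow i. if U = i then l i else 0)"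
    by (rule sum.cong) (auto simp: alt_K assms)
  also have "\<dots> = l i" using assms by simp
  finally show ?thesis .
qed


lemma UNIV_cells: "(UNIV::'f::finite set set) = insert {} cells_I" and nin_cells: "({}::'f set) \<notin> cells_I"
  by (auto simp: cells_I_def)

definition expo_pos :: "('f::finite set \<Rightarrow> int) \<Rightarrow> 'f set \<Rightarrow> nat" where
  "expo_pos d = (\<lambda>v. if v = {} then (\<Sum>i\<in>cells_I. nat (- d i)) else nat (d v))"
definition expo_neg :: "('f::finite set \<Rightarrow> int) \<Rightarrow> 'f set \<Rightarrow> nat" where
  "expo_neg d = (\<lambda>v. if v = {} then (\<Sum>i\<in>cells_I. nat (d i)) else nat (- d v))"
definition bpoly :: "('f::finite set \<Rightarrow> int) \<Rightarrow> ('f set \<Rightarrow> nat) \<Rightarrow> real" where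
  "bpoly d = (\<lambda>m. (if m = expo_pos d then 1 else 0) - (if m = expo_neg d then 1 else 0))"

lemma bpoly_support: "expo_pos d \<noteq> expo_neg d \<Longrightarrow> {m. bpoly d m \<noteq> 0} = {expo_pos d, expo_neg d}"
  by (auto simp: bpoly_def)

lemma bpoly_eval: "expo_pos d \<noteq> expo_neg d \<Longrightarrow>
   poly_eval (bpoly d) q = (\<Prod>v\<in>UNIV. (q $ v) ^ expo_pos d v) - (\<Prod>v\<in>UNIV. (q $ v) ^ expo_neg d v)"
  unfolding poly_eval_def by (simp add: bpoly_support) (simp add: bpoly_def)

lemma bpoly_is_poly: "is_poly (bpoly d)"
proof -
  have "{m. bpoly d m \<noteq> 0} \<subseteq> {expo_pos d, expo_neg d}" by (auto simp: bpoly_def split: if_splits)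
  then show ?thesis unfolding is_poly_def by (rule finite_subset) simp
qed

lemma deg_pos: "(\<Sum>v\<in>UNIV. expo_pos d v) = (\<Sum>i\<in>cells_I. nat (- d i)) + (\<Sum>i\<in>cells_I. nat (d i))"
  unfolding UNIV_cells by (simp add: nin_cells expo_pos_def, rule sum.cong) (auto simp: cells_I_def)

lemma deg_neg: "(\<Sum>v\<in>UNIV. expo_neg d v) = (\<Sum>i\<in>cells_I. nat (- d i)) + (\<Sum>i\<in>cells_I. nat (d i))"
proof -
  have "(\<Sum>v\<in>cells_I. expo_neg d v) = (\<Sum>i\<in>cells_I. nat (- d i))"
    by (rule sum.cong) (auto simp: cells_I_def expo_neg_def)
  then show ?thesis unfolding UNIV_cells by (simp add: nin_cells expo_neg_def)
qed

lemma bpoly_homog: "homogeneous_poly (bpoly d)"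
  unfolding homogeneous_poly_def
  by (rule exI[of _ "(\<Sum>i\<in>cells_I. nat (- d i)) + (\<Sum>i\<in>cells_I. nat (d i))"])
     (auto simp: bpoly_def deg_pos deg_neg split: if_splits)

lemma homog_prod_pos: "(\<Prod>v\<in>UNIV. (homog_pt p $ v) ^ expo_pos d v) = monom_pos p d"
  unfolding UNIV_cells monom_pos_def
  by (simp add: nin_cells expo_pos_def homog_pt_def, rule prod.cong) (auto simp: cells_I_def)

lemma homog_prod_neg: "(\<Prod>v\<in>UNIV. (homog_pt p $ v) ^ expo_neg d v) = monom_neg p d"
  unfolding UNIV_cells monom_neg_def
  by (simp add: nin_cells expo_neg_def homog_pt_def, rule prod.cong) (auto simp: cells_I_def)

lemma binom_eq:
  assumes "d \<in> int_kernel Fa" "q \<in> proj_closure Fa"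
  shows "(\<Prod>v\<in>UNIV. (q $ v) ^ expo_pos d v) = (\<Prod>v\<in>UNIV. (q $ v) ^ expo_neg d v)"
proof (cases "expo_pos d = expo_neg d")
  case True then show ?thesis by simp
next
  case False
  have "\<forall>p\<in>X_A Fa. poly_eval (bpoly d) (homog_pt p) = 0"
    using assms(1) by (auto simp: bpoly_eval[OF False] homog_prod_pos homog_prod_neg X_A_def)
  then have "poly_eval (bpoly d) q = 0"
    using assms(2) bpoly_is_poly bpoly_homog unfolding proj_closure_def by blast
  then show ?thesis by (simp add: bpoly_eval[OF False])
qed

lemma ln_prod_pow:
  assumes "\<forall>v. q $ v > (0::real)"
  shows "ln (\<Prod>v\<in>UNIV. (q $ v) ^ m v) = (\<Sum>v\<in>UNIV. real (m v) * ln (q $ v))"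
proof -
  have "\<forall>v. q $ v \<noteq> 0" using assms by (metis less_irrefl)
  then show ?thesis by (subst ln_prod) (auto simp: ln_realpow)
qed

lemma nat_diff_int: "real (nat x) - real (nat (- x)) = real_of_int x"
  by (cases "x \<ge> 0") auto

lemma kernel_vec:
  assumes "ascending_class Fa" "V \<in> Fa"
  shows "(\<lambda>U. if U \<noteq> {} \<and> U \<subseteq> V then (-1)^card V * (-1)^card U else 0 :: int) \<in> int_kernel Fa"
  unfolding int_kernel_def
proof (safe)
  fix W assume W: "W \<in> F_des Fa"
  then have Wne: "W \<noteq> {}" and WV: "W \<noteq> V" using assms by (auto simp: F_des_def)
  have "(\<Sum>i\<in>cells_I. design_matrix W i * (if i \<noteq> {} \<and> i \<subseteq> V then (-1)^card V * (-1)^card i else 0 :: int))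
      = (\<Sum>i\<in>cells_I. if i \<in> {i. i \<subseteq> V \<and> W \<subseteq> i} then (-1)^card V * (-1)^card i else 0)"
    by (rule sum.cong) (auto simp: design_matrix_def cells_I_def Wne)
  also have "\<dots> = (\<Sum>i\<in>{i. i \<subseteq> V \<and> W \<subseteq> i}. (-1)^card V * (-1)^card i)"
  proof -
    have "{i \<in> cells_I. i \<in> {i. i \<subseteq> V \<and> W \<subseteq> i}} = {i. i \<subseteq> V \<and> W \<subseteq> i}"
      using Wne by (auto simp: cells_I_def)
    then show ?thesis by (simp flip: sum.inter_filter)
  qed
  also have "\<dots> = 0"
  proof (cases "W \<subseteq> V")
    case True
    have "(\<Sum>i\<in>{i. i \<subseteq> V \<and> W \<subseteq> i}. (-1::int)^card i) = 0"
      using alt_K[OF finite True] WV by simp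
    then show ?thesis by (simp add: sum_distrib_left[symmetric])
  next
    case False
    then have e: "{i. i \<subseteq> V \<and> W \<subseteq> i} = {}" by auto
    show ?thesis by (simp only: e sum.empty)
  qed
  finally show "(\<Sum>i\<in>cells_I. design_matrix W i * (if i \<noteq> {} \<and> i \<subseteq> V then (-1)^card V * (-1)^card i else 0 :: int)) = 0" .
qed simp

lemma sum_univ_if: "(\<Sum>x\<in>(UNIV::'a::finite set). if x \<in> S then f x else 0) = sum f S"
  by (simp add: sum.If_cases)

lemma part1:
  assumes asc: "ascending_class Fa" and qc: "q \<in> proj_closure Fa" and pos: "\<forall>v. q $ v > 0"
    and V: "V \<in> Fa"
  shows "(\<Sum>U\<in>Pow V. (-1)^card V * (-1)^card U * ln (q $ U)) = 0"
proof -
  define d where "d = (\<lambda>U. if U \<noteq> {} \<and> U \<subseteq> V then (-1)^card V * (-1)^card U else 0 :: int)"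
  have Vne: "V \<noteq> {}" using asc V by (auto simp: ascending_class_def)
  have dk: "d \<in> int_kernel Fa" unfolding d_def by (rule kernel_vec[OF asc V])
  have "ln (\<Prod>v\<in>UNIV. (q $ v) ^ expo_pos d v) = ln (\<Prod>v\<in>UNIV. (q $ v) ^ expo_neg d v)"
    using binom_eq[OF dk qc] by simp
  then have "(\<Sum>v\<in>UNIV. real (expo_pos d v) * ln (q $ v)) = (\<Sum>v\<in>UNIV. real (expo_neg d v) * ln (q $ v))"
    by (simp add: ln_prod_pow[OF pos])
  then have E: "(\<Sum>v\<in>UNIV. (real (expo_pos d v) - real (expo_neg d v)) * ln (q $ v)) = 0"
    by (simp add: left_diff_distrib sum_subtractf)
  have g: "real (expo_pos d v) - real (expo_neg d v) = (if v \<in> Pow V then (-1)^card V * (-1)^card v else 0)" for v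
  proof (cases "v = {}")
    case False
    then show ?thesis by (simp add: expo_pos_def expo_neg_def nat_diff_int d_def)
  next
    case True
    have "real (expo_pos d v) - real (expo_neg d v) = - (\<Sum>i\<in>cells_I. real_of_int (d i))"
    proof -
      have h: "real (nat (- d x)) - real (nat (d x)) = - real_of_int (d x)" for x
        using nat_diff_int[of "d x"] by linarith
      show ?thesis
        using True by (simp add: expo_pos_def expo_neg_def of_nat_sum h flip: sum_subtractf sum_negf)
    qed
    also have "(\<Sum>i\<in>cells_I. real_of_int (d i)) = (\<Sum>i\<in>cells_I. if i \<in> Pow V then (-1)^card V * (-1)^card i else 0)"
      by (rule sum.cong) (auto simp: d_def cells_I_def)
    also have "\<dots> = (\<Sum>i\<in>UNIV. if i \<in> Pow V then (-1)^card V * (-1)^card i else 0) - (-1)^card V"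
      unfolding UNIV_cells by (simp add: nin_cells)
    also have "(\<Sum>i\<in>UNIV. if i \<in> Pow V then (-1)^card V * (-1)^card i else (0::real)) = (-1)^card V * (\<Sum>i\<in>Pow V. (-1)^card i)"
      by (subst sum_univ_if) (simp add: sum_distrib_left)
    also have "(\<Sum>i\<in>Pow V. (-1::real)^card i) = 0"
    proof -
      have "Pow V = {T. T \<subseteq> V \<and> {} \<subseteq> T}" by auto
      then show ?thesis using alt_K[OF finite, of "{}" V] Vne by simp
    qed
    finally show ?thesis using True by simp
  qed
  have "(\<Sum>v\<in>UNIV. (real (expo_pos d v) - real (expo_neg d v)) * ln (q $ v))
     = (\<Sum>v\<in>UNIV. if v \<in> Pow V then (-1)^card V * (-1)^card v * ln (q $ v) else 0)"
    unfolding g by (rule sum.cong) auto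
  with E show ?thesis by (simp only: sum_univ_if)
qed

lemma part2_XA:
  fixes q :: "real ^ ('f::finite set)" and \<beta> :: "'f set \<Rightarrow> real"
  assumes pos: "\<forall>v. q $ v > 0" and lb: "\<forall>i. ln (q $ i) = (\<Sum>V\<in>Pow i. \<beta> V)"
    and b0: "\<forall>V\<in>Fa. \<beta> V = 0"
  shows "(\<lambda>i. if i = {} then 0 else q $ i / q $ {}) \<in> X_A Fa"
proof -
  define p where "p = (\<lambda>i. if i = {} then 0 else q $ i / q $ {})"
  have ppos: "p i > 0" if "i \<in> cells_I" for i
    using that pos by (auto simp: p_def cells_I_def)
  have pne: "p i \<noteq> 0" if "i \<in> cells_I" for i using ppos[OF that] by simp
  have lnp: "ln (p i) = (\<Sum>W\<in>F_des Fa. real_of_int (design_matrix W i) * \<beta> W)" if i: "i \<in> cells_I" for i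
  proof -
    have "ln (p i) = ln (q $ i) - ln (q $ {})"
    proof -
      have "i \<noteq> {}" using i by (simp add: cells_I_def)
      then have e: "p i = q $ i / q $ {}" by (simp add: p_def)
      have a: "q $ i > 0" and b: "q $ {} > 0" using pos by auto
      show ?thesis using a b by (simp add: e ln_div)
    qed
    also have "ln (q $ {}) = \<beta> {}" using lb by simp
    also have "ln (q $ i) = \<beta> {} + (\<Sum>V\<in>Pow i - {{}}. \<beta> V)"
      using lb by (simp add: sum.remove[of "Pow i" "{}"])
    also have "(\<Sum>V\<in>Pow i - {{}}. \<beta> V) = (\<Sum>W\<in>UNIV. if W \<in> Pow i - {{}} then \<beta> W else 0)"
      by (simp only: sum_univ_if)
    also have "\<dots> = (\<Sum>W\<in>UNIV. if W \<in> F_des Fa then real_of_int (design_matrix W i) * \<beta> W else 0)"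
      by (rule sum.cong) (auto simp: F_des_def design_matrix_def b0)
    also have "\<dots> = (\<Sum>W\<in>F_des Fa. real_of_int (design_matrix W i) * \<beta> W)"
      by (simp only: sum_univ_if)
    finally show ?thesis by simp
  qed
  show ?thesis unfolding p_def[symmetric] X_A_def
  proof (safe)
    fix d assume dk: "d \<in> int_kernel Fa"
    have S: "(\<Sum>i\<in>cells_I. real_of_int (d i) * ln (p i)) = 0"
    proof -
      have "(\<Sum>i\<in>cells_I. real_of_int (d i) * ln (p i))
          = (\<Sum>i\<in>cells_I. \<Sum>W\<in>F_des Fa. real_of_int (d i) * (real_of_int (design_matrix W i) * \<beta> W))"
        by (rule sum.cong) (auto simp: lnp sum_distrib_left)
      also have "\<dots> = (\<Sum>W\<in>F_des Fa. \<Sum>i\<in>cells_I. real_of_int (d i) * (real_of_int (design_matrix W i) * \<beta> W))"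
        by (rule sum.swap)
      also have "\<dots> = (\<Sum>W\<in>F_des Fa. \<beta> W * real_of_int (\<Sum>i\<in>cells_I. design_matrix W i * d i))"
        by (rule sum.cong) (auto simp: of_int_sum sum_distrib_left mult_ac)
      also have "\<dots> = 0" using dk by (simp add: int_kernel_def)
      finally show ?thesis .
    qed
    have "ln (monom_pos p d) = (\<Sum>i\<in>cells_I. real (nat (d i)) * ln (p i))"
      unfolding monom_pos_def using pne by (subst ln_prod) (auto simp: ln_realpow)
    moreover have "ln (monom_neg p d) = (\<Sum>i\<in>cells_I. real (nat (- d i)) * ln (p i))"
      unfolding monom_neg_def using pne by (subst ln_prod) (auto simp: ln_realpow)
    moreover have "(\<Sum>i\<in>cells_I. real (nat (d i)) * ln (p i)) - (\<Sum>i\<in>cells_I. real (nat (- d i)) * ln (p i))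
        = (\<Sum>i\<in>cells_I. real_of_int (d i) * ln (p i))"
      by (simp add: nat_diff_int flip: sum_subtractf left_diff_distrib)
    ultimately have "ln (monom_pos p d) = ln (monom_neg p d)" using S by simp
    moreover have "monom_pos p d > 0" "monom_neg p d > 0"
      unfolding monom_pos_def monom_neg_def using ppos by (auto intro!: prod_pos)
    ultimately show "monom_pos p d = monom_neg p d" by simp
  next
    fix i :: "'f set" assume "i \<in> cells_I" then show "0 \<le> p i"
      using ppos by (auto intro: less_imp_le)
  qed (simp add: p_def)
qed

lemma part2:
  fixes q :: "real ^ ('f::finite set)" and \<beta> :: "'f set \<Rightarrow> real"
  assumes pos: "\<forall>v. q $ v > 0" and lb: "\<forall>i. ln (q $ i) = (\<Sum>V\<in>Pow i. \<beta> V)"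
    and b0: "\<forall>V\<in>Fa. \<beta> V = 0"
  shows "q \<in> proj_closure Fa"
  unfolding proj_closure_def
proof (safe)
  fix c assume hc: "homogeneous_poly c" and van: "\<forall>p\<in>X_A Fa. poly_eval c (homog_pt p) = 0"
  define p where "p = (\<lambda>i. if i = {} then 0 else q $ i / q $ {})"
  have pX: "p \<in> X_A Fa" unfolding p_def by (rule part2_XA[OF pos lb b0])
  obtain n where n: "\<forall>m. c m \<noteq> 0 \<longrightarrow> (\<Sum>v\<in>UNIV. m v) = n" using hc by (auto simp: homogeneous_poly_def)
  have qv: "q $ v = q $ {} * (homog_pt p $ v)" for v
    using pos[rule_format, of "{}"] by (auto simp: homog_pt_def p_def)
  have "poly_eval c q = (\<Sum>m\<in>{m. c m \<noteq> 0}. c m * (q $ {} ^ n * (\<Prod>v\<in>UNIV. (homog_pt p $ v) ^ m v)))"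
    unfolding poly_eval_def
  proof (rule sum.cong[OF refl])
    fix m assume "m \<in> {m. c m \<noteq> 0}"
    then have "(\<Sum>v\<in>UNIV. m v) = n" using n by auto
    then have pn: "(\<Prod>v\<in>UNIV. q $ {} ^ m v) = q $ {} ^ n" by (simp flip: power_sum)
    show "c m * (\<Prod>v\<in>UNIV. (q $ v) ^ m v) = c m * (q $ {} ^ n * (\<Prod>v\<in>UNIV. (homog_pt p $ v) ^ m v))"
      by (subst qv) (simp add: power_mult_distrib prod.distrib pn)
  qed
  also have "\<dots> = q $ {} ^ n * poly_eval c (homog_pt p)"
    unfolding poly_eval_def by (simp add: sum_distrib_left mult_ac)
  also have "\<dots> = 0" using van pX by simp
  finally show "poly_eval c q = 0" .
qed

theorem theorem6:
  fixes Fa :: "'f::finite set set"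
  assumes "ascending_class Fa"
  shows "(proj_closure Fa \<inter> int_simplex) homeomorphic LL Fa"
proof -
  have "proj_closure Fa \<inter> int_simplex = LL Fa"
  proof (intro equalityI subsetI)
    fix q assume q: "q \<in> proj_closure Fa \<inter> int_simplex"
    then have pos: "\<forall>v. q $ v > 0" and s: "(\<Sum>i\<in>UNIV. q $ i) = 1" and qc: "q \<in> proj_closure Fa"
      by (auto simp: int_simplex_def)
    define \<beta> where "\<beta> = (\<lambda>V. \<Sum>U\<in>Pow V. (-1)^card V * (-1)^card U * ln (q $ U) :: real)"
    have "\<forall>i. ln (q $ i) = (\<Sum>V\<in>Pow i. \<beta> V)"
      unfolding \<beta>_def using mobius_inv[OF finite, where l="\<lambda>U. ln (q $ U)"] by simp
    moreover have "\<forall>V\<in>Fa. \<beta> V = 0"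
      unfolding \<beta>_def using part1[OF assms qc pos] by blast
    ultimately show "q \<in> LL Fa" using pos s unfolding LL_def by blast
  next
    fix q assume "q \<in> LL Fa"
    then obtain \<beta> where pos: "\<forall>v. q $ v > 0" and s: "(\<Sum>i\<in>UNIV. q $ i) = 1"
      and lb: "\<forall>i. ln (q $ i) = (\<Sum>V\<in>Pow i. \<beta> V)" and b0: "\<forall>V\<in>Fa. \<beta> V = 0"
      unfolding LL_def by blast
    show "q \<in> proj_closure Fa \<inter> int_simplex"
      using part2[OF pos lb b0] pos s by (auto simp: int_simplex_def)
  qed
  then show ?thesis by (simp add: homeomorphic_refl)
qed

end
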